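(* Let $0<\epsilon\le\beta<\tfrac12$ and $b>0$. Let $\widehat Q_2$ be the estimator $$\widehat Q_2=\frac1n\sum_{i=1}^n\big[(X_i^2-\sigma^2\tau_n)_+-\mu_0\big]\big[(Y_i^2-\sigma^2\tau_n)_+-\theta_0\big],\qquad \mu_0=\theta_0:=E_0(Y_i^2-\sigma^2\tau_n)_+,$$ with threshold $\tau_n=\log n$, where $E_0$ denotes expectation when $Y_i\sim N(0,\sigma^2)$. Then there is a constant $C>0$ (depending only on $\beta,\epsilon,b,\sigma$) such that for all sufficiently large $n$, $$\sup_{(\mu,\theta)\in\Omega(\beta,\epsilon,b)}E_{(\mu,\theta)}\big(\widehat Q_2-Q(\mu,\theta)\big)^2\le C\Big[n^{2\epsilon+4b-2}(\log n)^2+n^{\epsilon+6b-2}\Big].$$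
   Context: Gaussian two-sequence model: one observes $X_i=\mu_i+\sigma z_i'$, $Y_i=\theta_i+\sigma z_i$, $i=1,\dots,n$, where $z_1',\dots,z_n',z_1,\dots,z_n$ are i.i.d. $N(0,1)$ and the noise level $\sigma>0$ is known. The target functional is $Q(\mu,\theta)=\frac1n\sum_{i=1}^n\mu_i^2\theta_i^2$. For $x\in\mathbb R$, $x_+=\max\{x,0\}$. For vectors, $\|\mu\|_0$ is the number of nonzero entries, $\|\mu\|_\infty=\max_i|\mu_i|$, and $\mu\star\theta=(\mu_1\theta_1,\dots,\mu_n\theta_n)$. With $k_n=n^\beta$, $q_n=n^\epsilon$, $s_n=n^b$ (where $0<\epsilon\le\beta<\tfrac12$, $b\in\mathbb R$), the parameter space is $$\Omega(\beta,\epsilon,b)=\{(\mu,\theta)\in\mathbb R^n\times\mathbb R^n:\|\mu\|_0\le k_n,\|\mu\|_\infty\le s_n,\|\theta\|_0\le k_n,\|\theta\|_\infty\le s_n,\|\mu\star\theta\|_0\le q_n\}.$$ *)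

theory Defs
  imports "HOL-Probability.Probability"
begin

definition std_gauss :: "real measure" where
  "std_gauss = density lborel std_normal_density"

definition noise :: "nat \<Rightarrow> ((nat \<Rightarrow> real) \<times> (nat \<Rightarrow> real)) measure" where
  "noise n = (PiM {..<n} (\<lambda>_. std_gauss)) \<Otimes>\<^sub>M (PiM {..<n} (\<lambda>_. std_gauss))"

definition tau :: "nat \<Rightarrow> real" where
  "tau n = ln (real n)"

definition cent0 :: "real \<Rightarrow> nat \<Rightarrow> real" where
  "cent0 \<sigma> n = (\<integral>z. max ((\<sigma> * z)\<^sup>2 - \<sigma>\<^sup>2 * tau n) 0 \<partial>std_gauss)"

definition Qhat2 :: "real \<Rightarrow> nat \<Rightarrow> (nat \<Rightarrow> real) \<Rightarrow> (nat \<Rightarrow> real) \<Rightarrow> real" where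
  "Qhat2 \<sigma> n X Y = (1 / real n) * (\<Sum>i<n.
      (max ((X i)\<^sup>2 - \<sigma>\<^sup>2 * tau n) 0 - cent0 \<sigma> n) *
      (max ((Y i)\<^sup>2 - \<sigma>\<^sup>2 * tau n) 0 - cent0 \<sigma> n))"

definition Qfun :: "nat \<Rightarrow> (nat \<Rightarrow> real) \<Rightarrow> (nat \<Rightarrow> real) \<Rightarrow> real" where
  "Qfun n \<mu> \<theta> = (1 / real n) * (\<Sum>i<n. (\<mu> i)\<^sup>2 * (\<theta> i)\<^sup>2)"

definition Omega :: "real \<Rightarrow> real \<Rightarrow> real \<Rightarrow> nat \<Rightarrow> ((nat \<Rightarrow> real) \<times> (nat \<Rightarrow> real)) set" where
  "Omega \<beta> \<epsilon> b n = {(\<mu>, \<theta>).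
      real (card {i\<in>{..<n}. \<mu> i \<noteq> 0}) \<le> real n powr \<beta> \<and>
      (\<forall>i<n. \<bar>\<mu> i\<bar> \<le> real n powr b) \<and>
      real (card {i\<in>{..<n}. \<theta> i \<noteq> 0}) \<le> real n powr \<beta> \<and>
      (\<forall>i<n. \<bar>\<theta> i\<bar> \<le> real n powr b) \<and>
      real (card {i\<in>{..<n}. \<mu> i * \<theta> i \<noteq> 0}) \<le> real n powr \<epsilon>}"

definition mse :: "real \<Rightarrow> nat \<Rightarrow> (nat \<Rightarrow> real) \<Rightarrow> (nat \<Rightarrow> real) \<Rightarrow> ennreal" where
  "mse \<sigma> n \<mu> \<theta> = (\<integral>\<^sup>+ w. ennreal ((Qhat2 \<sigma> n (\<lambda>i. \<mu> i + \<sigma> * fst w i) (\<lambda>i. \<theta> i + \<sigma> * snd w i)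
        - Qfun n \<mu> \<theta>)\<^sup>2) \<partial>noise n)"

end

theory Submission
  imports Defs
begin


lemma sg_prob: "prob_space std_gauss"
  unfolding std_gauss_def using prob_space_normal_density[of 1 0] by simp

lemma sg_space[simp]: "space std_gauss = UNIV"
  unfolding std_gauss_def by simp

lemma sg_sets[simp]: "sets std_gauss = sets borel"
  unfolding std_gauss_def by simp

lemma sg_meas[simp]: "measurable std_gauss N = measurable borel N"
  by (rule measurable_cong_sets) auto

lemma sg_int_pow: "integrable std_gauss (\<lambda>z. z ^ k)"
  unfolding std_gauss_def
  by (subst integrable_real_density) (auto simp: integrable_std_normal_moment)

lemma sg_integral_pow: "integral\<^sup>L std_gauss (\<lambda>z. z ^ k) = integral\<^sup>L lborel (\<lambda>x. std_normal_density x * x^k)"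
  unfolding std_gauss_def
  by (subst integral_real_density) auto

lemma sg_m1: "integral\<^sup>L std_gauss (\<lambda>z. z) = 0"
  using sg_integral_pow[of 1] integral_std_normal_moment_odd[of 0] by simp
lemma sg_m2: "integral\<^sup>L std_gauss (\<lambda>z. z^2) = 1"
  using sg_integral_pow[of 2] integral_std_normal_moment_even[of 1] by simp
lemma sg_m3: "integral\<^sup>L std_gauss (\<lambda>z. z^3) = 0"
  using sg_integral_pow[of 3] integral_std_normal_moment_odd[of 1] by simp
lemma sg_m4: "integral\<^sup>L std_gauss (\<lambda>z. z^4) = 3"
  using sg_integral_pow[of 4] integral_std_normal_moment_even[of 2] by (simp add: fact_numeral)

lemma sg_int_const: "integrable std_gauss (\<lambda>z. c::real)"
  using prob_space.finite_measure[OF sg_prob] finite_measure.integrable_const by blast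

lemma sg_int_poly4: "integrable std_gauss (\<lambda>z. c0 + c1*z + c2*z^2 + c3*z^3 + c4*z^4 :: real)"
proof -
  have z1: "integrable std_gauss (\<lambda>z. z)" using sg_int_pow[of 1] by simp
  show ?thesis by (intro Bochner_Integration.integrable_add; simp add: z1 sg_int_const sg_int_pow)
qed

lemma sg_poly4: "integral\<^sup>L std_gauss (\<lambda>z. c0 + c1*z + c2*z^2 + c3*z^3 + c4*z^4 :: real) = c0 + c2 + 3*c4"
proof -
  have i: "\<And>c k. integrable std_gauss (\<lambda>z. (c::real) * z^k)" using sg_int_pow by auto
  have c: "integral\<^sup>L std_gauss (\<lambda>z. c0) = c0"
    using prob_space.prob_space[OF sg_prob] by (simp add: measure_def)
  have "integral\<^sup>L std_gauss (\<lambda>z. c0 + c1*z + c2*z^2 + c3*z^3 + c4*z^4) =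
     integral\<^sup>L std_gauss (\<lambda>z. c0) + c1 * integral\<^sup>L std_gauss (\<lambda>z. z) + c2 * integral\<^sup>L std_gauss (\<lambda>z. z^2)
     + c3 * integral\<^sup>L std_gauss (\<lambda>z. z^3) + c4 * integral\<^sup>L std_gauss (\<lambda>z. z^4)"
    using i[of c1 1] i[of c2 2] i[of c3 3] i[of c4 4] sg_int_const sg_int_pow[of 1]
    by (simp add: integral_add integrable_add)
  then show ?thesis using c sg_m1 sg_m2 sg_m3 sg_m4 by simp
qed

lemma sg_int_bound:
  fixes f :: "real \<Rightarrow> real"
  assumes [measurable]: "f \<in> borel_measurable borel" and b: "\<And>z. \<bar>f z\<bar> \<le> A + B * z^4"
  shows "integrable std_gauss f"
proof (rule Bochner_Integration.integrable_bound[OF sg_int_poly4[of A 0 0 0 B]])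
  show "f \<in> borel_measurable std_gauss" by simp
  show "AE z in std_gauss. norm (f z) \<le> norm (A + 0*z + 0*z^2 + 0*z^3 + B*z^4)"
    using b by (auto intro: order.trans[OF _ abs_ge_self])
qed

lemma sg_mgf:
  fixes \<kappa> :: real assumes k: "0 \<le> \<kappa>" "\<kappa> < 1/2"
  shows "integrable std_gauss (\<lambda>z. exp (\<kappa> * z^2))"
    and "integral\<^sup>L std_gauss (\<lambda>z. exp (\<kappa> * z^2)) = 1 / sqrt (1 - 2*\<kappa>)"
proof -
  define s where "s = 1 / sqrt (1 - 2*\<kappa>)"
  have s0: "s > 0" using k by (simp add: s_def)
  have s2: "s^2 = 1 / (1 - 2*\<kappa>)" using k by (simp add: s_def power_divide)
  have eq: "std_normal_density z * exp (\<kappa> * z^2) = s * normal_density 0 s z" for z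
  proof -
    have "sqrt (2 * pi * s\<^sup>2) = sqrt (2*pi) * s" using s0 by (simp add: real_sqrt_mult)
    moreover have "- z\<^sup>2 / 2 + \<kappa> * z^2 = -(z - 0)\<^sup>2 / (2 * s\<^sup>2)" using k by (simp add: s2 field_simps)
    ultimately show ?thesis using s0
      by (simp add: normal_density_def std_normal_density_def exp_add[symmetric] field_simps)
  qed
  show "integrable std_gauss (\<lambda>z. exp (\<kappa> * z^2))"
  proof -
    have "integrable lborel (\<lambda>z. s * normal_density 0 s z)"
      using integrable_normal_density[of s 0] s0 by simp
    then show ?thesis
      unfolding std_gauss_def by (subst integrable_real_density) (auto simp: eq)
  qed
  show "integral\<^sup>L std_gauss (\<lambda>z. exp (\<kappa> * z^2)) = 1 / sqrt (1 - 2*\<kappa>)"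
  proof -
    have "integral\<^sup>L std_gauss (\<lambda>z. exp (\<kappa> * z^2)) = integral\<^sup>L lborel (\<lambda>z. s * normal_density 0 s z)"
      unfolding std_gauss_def by (subst integral_real_density) (auto simp: eq)
    also have "\<dots> = s" using integral_normal_density[of s 0] s0 by simp
    finally show ?thesis by (simp add: s_def)
  qed
qed

lemma sg_int_boundk:
  fixes f :: "real \<Rightarrow> real"
  assumes [measurable]: "f \<in> borel_measurable borel" and b: "\<And>z. \<bar>f z\<bar> \<le> A + B * z^k"
  shows "integrable std_gauss f"
proof (rule Bochner_Integration.integrable_bound)
  show "integrable std_gauss (\<lambda>z. A + B * z^k)"
    by (intro Bochner_Integration.integrable_add; simp add: sg_int_const sg_int_pow)
  show "f \<in> borel_measurable std_gauss" by simp
  show "AE z in std_gauss. norm (f z) \<le> norm (A + B*z^k)"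
    using b by (auto intro: order.trans[OF _ abs_ge_self])
qed

lemma var_expand:
  fixes f :: "'a \<Rightarrow> real"
  assumes P: "prob_space M" and f: "integrable M f" and f2: "integrable M (\<lambda>x. (f x)^2)"
  shows "integrable M (\<lambda>x. (f x - e)^2)"
    and "integral\<^sup>L M (\<lambda>x. (f x - e)^2) = integral\<^sup>L M (\<lambda>x. (f x)^2) - 2*e*integral\<^sup>L M f + e^2"
proof -
  interpret prob_space M by fact
  have eq: "(\<lambda>x. (f x - e)^2) = (\<lambda>x. (f x)^2 + ((-2*e) * f x + e^2))"
    by (auto simp: power2_eq_square algebra_simps)
  show "integrable M (\<lambda>x. (f x - e)^2)" unfolding eq
    using f f2 by (intro Bochner_Integration.integrable_add integrable_mult_right integrable_const) auto
  show "integral\<^sup>L M (\<lambda>x. (f x - e)^2) = integral\<^sup>L M (\<lambda>x. (f x)^2) - 2*e*integral\<^sup>L M f + e^2"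
    unfolding eq using f f2
    by (subst Bochner_Integration.integral_add; (subst Bochner_Integration.integral_add)?) (auto simp: prob_space)
qed




definition gf :: "real \<Rightarrow> real \<Rightarrow> real \<Rightarrow> real" where "gf c m x = max (x^2 - c) 0 - m"

lemma gf_meas[measurable]: "(\<lambda>z. gf c m (\<rho> + \<sigma>*z)) \<in> borel_measurable borel"
  unfolding gf_def by measurable

lemma sq_le: "(\<rho> + \<sigma>*z)^2 \<le> 2*\<rho>^2 + 2*\<sigma>^2*z^2" for \<rho> \<sigma> z :: real
proof -
  have "0 \<le> (\<rho> - \<sigma>*z)^2" by simp
  then show ?thesis by (simp add: power2_eq_square algebra_simps)
qed

lemma z2_le: "z^2 \<le> 1 + z^4" for z :: real
proof -
  have "0 \<le> (z^2 - 1/2)^2 + 3/4" by simp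
  then show ?thesis by (simp add: power2_eq_square algebra_simps power4_eq_xxxx)
qed

lemma gf_bound: "\<bar>gf c m (\<rho> + \<sigma>*z)\<bar> \<le> (2*\<rho>^2 + 2*\<sigma>^2 + \<bar>c\<bar> + \<bar>m\<bar>) + 2*\<sigma>^2 * z^4"
proof -
  have "\<bar>gf c m (\<rho> + \<sigma>*z)\<bar> \<le> (\<rho> + \<sigma>*z)^2 + \<bar>c\<bar> + \<bar>m\<bar>"
    using zero_le_power2[of "\<rho> + \<sigma>*z"] unfolding gf_def by (smt (verit))
  also have "\<dots> \<le> 2*\<rho>^2 + 2*\<sigma>^2*z^2 + \<bar>c\<bar> + \<bar>m\<bar>" using sq_le by simp
  also have "\<dots> \<le> 2*\<rho>^2 + 2*\<sigma>^2*(1 + z^4) + \<bar>c\<bar> + \<bar>m\<bar>"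
    using z2_le[of z] by (intro add_mono mult_left_mono) auto
  finally show ?thesis by (simp add: algebra_simps)
qed

lemma gf_int: "integrable std_gauss (\<lambda>z. gf c m (\<rho> + \<sigma>*z))"
  by (rule sg_int_boundk[OF gf_meas gf_bound])

lemma gf_int2: "integrable std_gauss (\<lambda>z. (gf c m (\<rho> + \<sigma>*z))^2)"
proof (rule sg_int_boundk)
  fix z
  define K0 where "K0 = 2*\<rho>^2 + 2*\<sigma>^2 + \<bar>c\<bar> + \<bar>m\<bar>"
  define K1 where "K1 = 2*\<sigma>^2"
  have K: "0 \<le> K0" "0 \<le> K1" by (auto simp: K0_def K1_def)
  have "\<bar>gf c m (\<rho> + \<sigma>*z)\<bar> \<le> K0 + K1*z^4" using gf_bound unfolding K0_def K1_def .
  then have "\<bar>gf c m (\<rho> + \<sigma>*z)\<bar>^2 \<le> (K0 + K1*z^4)^2" by (rule power_mono) simp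
  also have "\<dots> \<le> 2*K0^2 + 2*K1^2*z^8"
  proof -
    have "0 \<le> (K0 - K1*z^4)^2" by simp
    then show ?thesis by (simp add: power2_eq_square algebra_simps power_mult_distrib flip: power_add)
  qed
  finally show "\<bar>(gf c m (\<rho> + \<sigma>*z))^2\<bar> \<le> 2*K0^2 + 2*K1^2*z^8" by simp
qed measurable

lemma sq_poly: "(\<lambda>z. (\<rho> + \<sigma>*z)^2) = (\<lambda>z. \<rho>^2 + (2*\<rho>*\<sigma>)*z + \<sigma>^2*z^2 + 0*z^3 + 0*z^4)" for \<rho> \<sigma> :: real
  by (auto simp: power2_eq_square algebra_simps)

lemma sq_integral: "integral\<^sup>L std_gauss (\<lambda>z. (\<rho> + \<sigma>*z)^2) = \<rho>^2 + \<sigma>^2"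
  unfolding sq_poly sg_poly4 by simp
lemma sq_integrable: "integrable std_gauss (\<lambda>z. (\<rho> + \<sigma>*z)^2)"
  unfolding sq_poly by (rule sg_int_poly4)

lemma psi_bounds:
  assumes c: "0 \<le> c"
  shows "\<rho>^2 + \<sigma>^2 - c \<le> integral\<^sup>L std_gauss (\<lambda>z. max ((\<rho> + \<sigma>*z)^2 - c) 0)"
    and "integral\<^sup>L std_gauss (\<lambda>z. max ((\<rho> + \<sigma>*z)^2 - c) 0) \<le> \<rho>^2 + \<sigma>^2"
proof -
  have i: "integrable std_gauss (\<lambda>z. max ((\<rho> + \<sigma>*z)^2 - c) 0)"
    using gf_int[of c 0 \<rho> \<sigma>] by (simp add: gf_def)
  have "integral\<^sup>L std_gauss (\<lambda>z. (\<rho> + \<sigma>*z)^2 - c) \<le> integral\<^sup>L std_gauss (\<lambda>z. max ((\<rho> + \<sigma>*z)^2 - c) 0)"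
    using i sq_integrable sg_int_const by (intro integral_mono) auto
  moreover have "integral\<^sup>L std_gauss (\<lambda>z. (\<rho> + \<sigma>*z)^2 - c) = \<rho>^2 + \<sigma>^2 - c"
    using sq_integrable sg_int_const prob_space.prob_space[OF sg_prob]
    by (subst Bochner_Integration.integral_diff) (auto simp: sq_integral measure_def)
  ultimately show "\<rho>^2 + \<sigma>^2 - c \<le> integral\<^sup>L std_gauss (\<lambda>z. max ((\<rho> + \<sigma>*z)^2 - c) 0)" by simp
  have "integral\<^sup>L std_gauss (\<lambda>z. max ((\<rho> + \<sigma>*z)^2 - c) 0) \<le> integral\<^sup>L std_gauss (\<lambda>z. (\<rho> + \<sigma>*z)^2)"
    using i sq_integrable c by (intro integral_mono) auto
  then show "integral\<^sup>L std_gauss (\<lambda>z. max ((\<rho> + \<sigma>*z)^2 - c) 0) \<le> \<rho>^2 + \<sigma>^2"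
    by (simp add: sq_integral)
qed

lemma gf_integral: "integral\<^sup>L std_gauss (\<lambda>z. gf c m (\<rho> + \<sigma>*z)) =
    integral\<^sup>L std_gauss (\<lambda>z. max ((\<rho> + \<sigma>*z)^2 - c) 0) - m"
proof -
  have i: "integrable std_gauss (\<lambda>z. max ((\<rho> + \<sigma>*z)^2 - c) 0)"
    using gf_int[of c 0 \<rho> \<sigma>] by (simp add: gf_def)
  show ?thesis unfolding gf_def
    using i sg_int_const prob_space.prob_space[OF sg_prob]
    by (subst Bochner_Integration.integral_diff) (auto simp: measure_def)
qed

definition m0 :: "real \<Rightarrow> real \<Rightarrow> real" where
  "m0 c \<sigma> = integral\<^sup>L std_gauss (\<lambda>z. max ((\<sigma>*z)^2 - c) 0)"

lemma m0_bounds: "0 \<le> c \<Longrightarrow> 0 \<le> m0 c \<sigma> \<and> m0 c \<sigma> \<le> \<sigma>^2"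
  using psi_bounds(2)[of c 0 \<sigma>] unfolding m0_def by (auto intro: integral_nonneg_AE)

lemma mean0: "integral\<^sup>L std_gauss (\<lambda>z. gf c (m0 c \<sigma>) (0 + \<sigma>*z)) = 0"
  using gf_integral[of c "m0 c \<sigma>" 0 \<sigma>] by (simp add: m0_def)

lemma mean_bound:
  assumes "0 \<le> c"
  shows "\<bar>integral\<^sup>L std_gauss (\<lambda>z. gf c (m0 c \<sigma>) (\<rho> + \<sigma>*z)) - \<rho>^2\<bar> \<le> c + \<sigma>^2"
  using psi_bounds[OF assms, of \<rho> \<sigma>] m0_bounds[OF assms, of \<sigma>]
  by (simp add: gf_integral abs_le_iff)

lemma arith1: "(B::real) = A - 2*d*E + d^2 \<Longrightarrow> A - E^2 \<le> B"
proof -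
  assume "B = A - 2*d*E + d^2"
  moreover have "0 \<le> (E - d)^2" by simp
  ultimately show ?thesis by (simp add: power2_eq_square algebra_simps)
qed

lemma var_bound:
  shows "integral\<^sup>L std_gauss (\<lambda>z. (gf c m (\<rho> + \<sigma>*z))^2) - (integral\<^sup>L std_gauss (\<lambda>z. gf c m (\<rho> + \<sigma>*z)))^2
     \<le> 4*\<rho>^2*\<sigma>^2 + 2*\<sigma>^4"
    and "0 \<le> integral\<^sup>L std_gauss (\<lambda>z. (gf c m (\<rho> + \<sigma>*z))^2) - (integral\<^sup>L std_gauss (\<lambda>z. gf c m (\<rho> + \<sigma>*z)))^2"
proof -
  let ?f = "\<lambda>z. gf c m (\<rho> + \<sigma>*z)"
  define E where "E = integral\<^sup>L std_gauss ?f"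
  define d where "d = max (\<rho>^2 + \<sigma>^2 - c) 0 - m"
  note ve = var_expand[OF sg_prob gf_int[of c m \<rho> \<sigma>] gf_int2[of c m \<rho> \<sigma>]]
  have "integral\<^sup>L std_gauss (\<lambda>z. (?f z)^2) - E^2 = integral\<^sup>L std_gauss (\<lambda>z. (?f z - E)^2)"
    using ve(2)[of E] by (simp add: E_def power2_eq_square)
  also have "\<dots> \<ge> 0" by (intro integral_nonneg_AE) auto
  finally show "0 \<le> integral\<^sup>L std_gauss (\<lambda>z. (?f z)^2) - (integral\<^sup>L std_gauss ?f)^2" by (simp add: E_def)
  have "integral\<^sup>L std_gauss (\<lambda>z. (?f z)^2) - E^2 \<le> integral\<^sup>L std_gauss (\<lambda>z. (?f z - d)^2)"
    using arith1[OF ve(2)[of d, folded E_def]] .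
  also have "\<dots> \<le> integral\<^sup>L std_gauss (\<lambda>z. \<sigma>^4 + (-4*\<rho>*\<sigma>^3)*z + (4*\<rho>^2*\<sigma>^2 - 2*\<sigma>^4)*z^2 + (4*\<rho>*\<sigma>^3)*z^3 + \<sigma>^4*z^4)"
  proof (intro integral_mono ve(1) sg_int_poly4)
    fix z
    have "\<bar>?f z - d\<bar> \<le> \<bar>(\<rho> + \<sigma>*z)^2 - (\<rho>^2 + \<sigma>^2)\<bar>"
      unfolding gf_def d_def by (smt (verit))
    then have "(?f z - d)^2 \<le> ((\<rho> + \<sigma>*z)^2 - (\<rho>^2 + \<sigma>^2))^2"
      by (metis abs_le_square_iff)
    also have "\<dots> = \<sigma>^4 + (-4*\<rho>*\<sigma>^3)*z + (4*\<rho>^2*\<sigma>^2 - 2*\<sigma>^4)*z^2 + (4*\<rho>*\<sigma>^3)*z^3 + \<sigma>^4*z^4"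
      by (simp add: power2_eq_square power3_eq_cube power4_eq_xxxx algebra_simps)
    finally show "(?f z - d)^2 \<le> \<sigma>^4 + (-4*\<rho>*\<sigma>^3)*z + (4*\<rho>^2*\<sigma>^2 - 2*\<sigma>^4)*z^2 + (4*\<rho>*\<sigma>^3)*z^3 + \<sigma>^4*z^4" .
  qed
  also have "\<dots> = 4*\<rho>^2*\<sigma>^2 + 2*\<sigma>^4" unfolding sg_poly4 by simp
  finally show "integral\<^sup>L std_gauss (\<lambda>z. (?f z)^2) - (integral\<^sup>L std_gauss ?f)^2 \<le> 4*\<rho>^2*\<sigma>^2 + 2*\<sigma>^4"
    by (simp add: E_def)
qed

lemma sq_le_exp:
  fixes y \<kappa> :: real assumes "0 \<le> y" "0 < \<kappa>"
  shows "y^2 \<le> (4/\<kappa>^2) * exp (\<kappa> * y)"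
proof -
  have "\<kappa>*y/2 \<le> 1 + \<kappa>*y/2" by simp
  also have "\<dots> \<le> exp (\<kappa>*y/2)" by (rule exp_ge_add_one_self)
  finally have "(\<kappa>*y/2)^2 \<le> (exp (\<kappa>*y/2))^2"
    using assms by (intro power_mono) auto
  also have "(exp (\<kappa>*y/2))^2 = exp (\<kappa>*y)" by (simp add: power2_eq_square flip: exp_add)
  finally have "\<kappa>^2 * y^2 / 4 \<le> exp (\<kappa>*y)" by (simp add: power_mult_distrib power_divide)
  then show ?thesis using assms by (simp add: field_simps)
qed

lemma tail_bound:
  fixes \<sigma> \<tau> \<kappa> :: real
  assumes s: "0 < \<sigma>" and k: "0 < \<kappa>" "\<kappa> < 1/2"
  shows "integral\<^sup>L std_gauss (\<lambda>z. (gf (\<sigma>^2*\<tau>) (m0 (\<sigma>^2*\<tau>) \<sigma>) (0 + \<sigma>*z))^2)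
     \<le> \<sigma>^4 * (4/\<kappa>^2) * exp (-\<kappa>*\<tau>) / sqrt (1 - 2*\<kappa>)"
proof -
  define c where "c = \<sigma>^2*\<tau>"
  define m where "m = m0 c \<sigma>"
  define \<psi> where "\<psi> = (\<lambda>z. gf c 0 (0 + \<sigma>*z))"
  have eqf: "gf c m (0 + \<sigma>*z) = \<psi> z - m" for z by (simp add: \<psi>_def gf_def)
  have Epsi: "integral\<^sup>L std_gauss \<psi> = m" by (simp add: \<psi>_def m_def m0_def gf_def)
  have ip: "integrable std_gauss \<psi>" using gf_int[of c 0 0 \<sigma>] by (simp add: \<psi>_def)
  have ip2: "integrable std_gauss (\<lambda>z. (\<psi> z)^2)" using gf_int2[of c 0 0 \<sigma>] by (simp add: \<psi>_def)
  note ve = var_expand[OF sg_prob ip ip2]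
  have "integral\<^sup>L std_gauss (\<lambda>z. (gf c m (0 + \<sigma>*z))^2) = integral\<^sup>L std_gauss (\<lambda>z. (\<psi> z - m)^2)"
    by (simp only: eqf)
  also have "\<dots> = integral\<^sup>L std_gauss (\<lambda>z. (\<psi> z)^2) - m^2"
    unfolding ve(2)[of m] Epsi by (simp add: power2_eq_square)
  also have "\<dots> \<le> integral\<^sup>L std_gauss (\<lambda>z. (\<psi> z)^2)" by simp
  also have "\<dots> \<le> integral\<^sup>L std_gauss (\<lambda>z. (\<sigma>^4 * (4/\<kappa>^2) * exp (-\<kappa>*\<tau>)) * exp (\<kappa> * z^2))"
  proof (intro integral_mono)
    show "integrable std_gauss (\<lambda>z. (\<psi> z)^2)" using gf_int2[of c 0 0 \<sigma>] by (simp add: \<psi>_def)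
    show "integrable std_gauss (\<lambda>z. (\<sigma>^4 * (4/\<kappa>^2) * exp (-\<kappa>*\<tau>)) * exp (\<kappa> * z^2))"
      using sg_mgf(1)[of \<kappa>] k by simp
    fix z
    have psi: "\<psi> z = \<sigma>^2 * max (z^2 - \<tau>) 0"
      using s by (simp add: \<psi>_def gf_def c_def power_mult_distrib max_mult_distrib_left algebra_simps)
    have "(max (z^2 - \<tau>) 0)^2 \<le> (4/\<kappa>^2) * exp (\<kappa> * (z^2 - \<tau>))"
    proof (cases "z^2 - \<tau> \<ge> 0")
      case True then show ?thesis using sq_le_exp[OF True k(1)] by simp
    next
      case False then show ?thesis by simp
    qed
    also have "exp (\<kappa> * (z^2 - \<tau>)) = exp (-\<kappa>*\<tau>) * exp (\<kappa> * z^2)"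
      by (simp add: algebra_simps flip: exp_add)
    finally have "(max (z^2 - \<tau>) 0)^2 \<le> (4/\<kappa>^2) * (exp (-\<kappa>*\<tau>) * exp (\<kappa> * z^2))" .
    then have "\<sigma>^4 * (max (z^2 - \<tau>) 0)^2 \<le> \<sigma>^4 * ((4/\<kappa>^2) * (exp (-\<kappa>*\<tau>) * exp (\<kappa> * z^2)))"
      by (intro mult_left_mono) auto
    then show "(\<psi> z)^2 \<le> (\<sigma>^4 * (4/\<kappa>^2) * exp (-\<kappa>*\<tau>)) * exp (\<kappa> * z^2)"
      by (simp add: psi power_mult_distrib algebra_simps flip: power_mult)
  qed
  also have "\<dots> = \<sigma>^4 * (4/\<kappa>^2) * exp (-\<kappa>*\<tau>) / sqrt (1 - 2*\<kappa>)"
    using sg_mgf(2)[of \<kappa>] k by simp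
  finally show ?thesis by (simp add: c_def m_def)
qed




lemma pair_prod:
  fixes F :: "'a \<Rightarrow> real" and G :: "'b \<Rightarrow> real"
  assumes M1: "prob_space M1" and M2: "prob_space M2"
    and F: "integrable M1 F" and G: "integrable M2 G"
  shows "integrable (M1 \<Otimes>\<^sub>M M2) (\<lambda>w. F (fst w) * G (snd w))"
    and "integral\<^sup>L (M1 \<Otimes>\<^sub>M M2) (\<lambda>w. F (fst w) * G (snd w)) = integral\<^sup>L M1 F * integral\<^sup>L M2 G"
proof -
  interpret P1: prob_space M1 by fact
  interpret P2: prob_space M2 by fact
  interpret pair_sigma_finite M1 M2 ..
  have [measurable]: "F \<in> borel_measurable M1" "G \<in> borel_measurable M2" using F G by auto
  show int: "integrable (M1 \<Otimes>\<^sub>M M2) (\<lambda>w. F (fst w) * G (snd w))"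
  proof (unfold integrable_iff_bounded, intro conjI)
    show "(\<lambda>w. F (fst w) * G (snd w)) \<in> borel_measurable (M1 \<Otimes>\<^sub>M M2)" by measurable
    have "(\<integral>\<^sup>+ w. ennreal (norm (F (fst w) * G (snd w))) \<partial>(M1 \<Otimes>\<^sub>M M2))
        = (\<integral>\<^sup>+ x. \<integral>\<^sup>+ y. ennreal (norm (F x)) * ennreal (norm (G y)) \<partial>M2 \<partial>M1)"
      by (subst P2.nn_integral_fst[symmetric]) (auto simp: abs_mult ennreal_mult)
    also have "\<dots> = (\<integral>\<^sup>+ x. ennreal (norm (F x)) \<partial>M1) * (\<integral>\<^sup>+ y. ennreal (norm (G y)) \<partial>M2)"
      by (simp add: nn_integral_cmult nn_integral_multc)
    also have "\<dots> < \<infinity>" using F G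
      by (simp add: integrable_iff_bounded ennreal_mult_less_top)
    finally show "(\<integral>\<^sup>+ w. ennreal (norm (F (fst w) * G (snd w))) \<partial>(M1 \<Otimes>\<^sub>M M2)) < \<infinity>" .
  qed
  show "integral\<^sup>L (M1 \<Otimes>\<^sub>M M2) (\<lambda>w. F (fst w) * G (snd w)) = integral\<^sup>L M1 F * integral\<^sup>L M2 G"
    using integral_fst'[OF int] by simp
qed

lemma pim_prod2:
  fixes f g :: "real \<Rightarrow> real"
  assumes M: "prob_space M" and I: "finite I" "i \<in> I" "j \<in> I" "i \<noteq> j"
    and f: "integrable M f" and g: "integrable M g"
  shows "integrable (PiM I (\<lambda>_. M)) (\<lambda>x. f (x i) * g (x j))"
    and "integral\<^sup>L (PiM I (\<lambda>_. M)) (\<lambda>x. f (x i) * g (x j)) = integral\<^sup>L M f * integral\<^sup>L M g"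
proof -
  interpret prob_space M by fact
  interpret product_prob_space "\<lambda>_. M" I by standard
  define F where "F = (\<lambda>k z. if k = i then f z else if k = j then g z else (1::real))"
  have intF: "\<And>k. k \<in> I \<Longrightarrow> integrable M (F k)"
    subgoal for k using f g by (cases "k = i"; cases "k = j") (simp_all add: F_def)
    done
  have pe: "(\<Prod>k\<in>I. F k (x k)) = f (x i) * g (x j)" for x
  proof -
    have "(\<Prod>k\<in>I. F k (x k)) = F i (x i) * (\<Prod>k\<in>I-{i}. F k (x k))"
      using I by (simp add: prod.remove)
    also have "(\<Prod>k\<in>I-{i}. F k (x k)) = F j (x j) * (\<Prod>k\<in>I-{i}-{j}. F k (x k))"
      using I by (subst prod.remove[of _ j]) auto
    also have "(\<Prod>k\<in>I-{i}-{j}. F k (x k)) = 1" by (intro prod.neutral) (auto simp: F_def)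
    finally show ?thesis using I by (simp add: F_def)
  qed
  have pi: "(\<Prod>k\<in>I. integral\<^sup>L M (F k)) = integral\<^sup>L M f * integral\<^sup>L M g"
  proof -
    have "(\<Prod>k\<in>I. integral\<^sup>L M (F k)) = integral\<^sup>L M (F i) * (\<Prod>k\<in>I-{i}. integral\<^sup>L M (F k))"
      using I by (simp add: prod.remove)
    also have "(\<Prod>k\<in>I-{i}. integral\<^sup>L M (F k)) = integral\<^sup>L M (F j) * (\<Prod>k\<in>I-{i}-{j}. integral\<^sup>L M (F k))"
      using I by (subst prod.remove[of _ j]) auto
    also have "(\<Prod>k\<in>I-{i}-{j}. integral\<^sup>L M (F k)) = 1"
      by (intro prod.neutral) (auto simp: F_def measure_def prob_space.emeasure_space_1[OF M])
    finally show ?thesis using I by (simp add: F_def)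
  qed
  show "integrable (PiM I (\<lambda>_. M)) (\<lambda>x. f (x i) * g (x j))"
    using product_integrable_prod[where f=F, OF I(1) intF] by (simp add: pe)
  show "integral\<^sup>L (PiM I (\<lambda>_. M)) (\<lambda>x. f (x i) * g (x j)) = integral\<^sup>L M f * integral\<^sup>L M g"
    using product_integral_prod[where f=F, OF I(1) intF] by (simp add: pe pi)
qed

lemma pim_prod1:
  fixes f :: "real \<Rightarrow> real"
  assumes M: "prob_space M" and I: "finite I" "i \<in> I"
    and f: "integrable M f"
  shows "integrable (PiM I (\<lambda>_. M)) (\<lambda>x. f (x i))"
    and "integral\<^sup>L (PiM I (\<lambda>_. M)) (\<lambda>x. f (x i)) = integral\<^sup>L M f"
proof -
  interpret prob_space M by fact
  interpret product_prob_space "\<lambda>_. M" I by standard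
  define F where "F = (\<lambda>k z. if k = i then f z else (1::real))"
  have intF: "\<And>k. k \<in> I \<Longrightarrow> integrable M (F k)"
    subgoal for k using f by (cases "k = i") (simp_all add: F_def)
    done
  have pe: "(\<Prod>k\<in>I. F k (x k)) = f (x i)" for x
    using I by (simp add: F_def prod.delta)
  have pi: "(\<Prod>k\<in>I. integral\<^sup>L M (F k)) = integral\<^sup>L M f"
  proof -
    have "(\<Prod>k\<in>I. integral\<^sup>L M (F k)) = (\<Prod>k\<in>I. if k = i then integral\<^sup>L M f else 1)"
      by (intro prod.cong) (auto simp: F_def measure_def prob_space.emeasure_space_1[OF M])
    then show ?thesis using I by (simp add: prod.delta)
  qed
  show "integrable (PiM I (\<lambda>_. M)) (\<lambda>x. f (x i))"
    using product_integrable_prod[where f=F, OF I(1) intF] by (simp add: pe)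
  show "integral\<^sup>L (PiM I (\<lambda>_. M)) (\<lambda>x. f (x i)) = integral\<^sup>L M f"
    using product_integral_prod[where f=F, OF I(1) intF] by (simp add: pe pi)
qed

lemma diag_sum:
  fixes e A :: "'i \<Rightarrow> real"
  assumes "finite I"
  shows "(\<Sum>i\<in>I. \<Sum>j\<in>I. if i = j then A i else e i * e j) = (\<Sum>i\<in>I. e i)^2 + (\<Sum>i\<in>I. A i - (e i)^2)"
proof -
  have "(\<Sum>i\<in>I. \<Sum>j\<in>I. if i = j then A i else e i * e j) =
        (\<Sum>i\<in>I. \<Sum>j\<in>I. e i * e j + (if i = j then A i - (e i)^2 else 0))"
    by (intro sum.cong refl) (auto simp: power2_eq_square)
  also have "\<dots> = (\<Sum>i\<in>I. \<Sum>j\<in>I. e i * e j) + (\<Sum>i\<in>I. A i - (e i)^2)"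
    using assms by (simp add: sum.distrib sum.delta)
  also have "(\<Sum>i\<in>I. \<Sum>j\<in>I. e i * e j) = (\<Sum>i\<in>I. e i)^2"
    by (simp add: power2_eq_square sum_product)
  finally show ?thesis .
qed

lemma pim_ij:
  fixes f :: "nat \<Rightarrow> real \<Rightarrow> real"
  assumes M: "prob_space M" and I: "finite I" "i \<in> I" "j \<in> I"
    and f: "\<And>i. i \<in> I \<Longrightarrow> integrable M (f i)" and f2: "\<And>i. i \<in> I \<Longrightarrow> integrable M (\<lambda>z. (f i z)^2)"
  shows "integrable (PiM I (\<lambda>_. M)) (\<lambda>x. f i (x i) * f j (x j))"
    and "integral\<^sup>L (PiM I (\<lambda>_. M)) (\<lambda>x. f i (x i) * f j (x j)) =
          (if i = j then integral\<^sup>L M (\<lambda>z. (f i z)^2) else integral\<^sup>L M (f i) * integral\<^sup>L M (f j))"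
proof -
  have "integrable (PiM I (\<lambda>_. M)) (\<lambda>x. f i (x i) * f j (x j)) \<and>
        integral\<^sup>L (PiM I (\<lambda>_. M)) (\<lambda>x. f i (x i) * f j (x j)) =
          (if i = j then integral\<^sup>L M (\<lambda>z. (f i z)^2) else integral\<^sup>L M (f i) * integral\<^sup>L M (f j))"
  proof (cases "i = j")
    case True
    then show ?thesis using pim_prod1[OF M I(1,2) f2[OF I(2)]] by (simp add: power2_eq_square)
  next
    case False
    then show ?thesis using pim_prod2[OF M I(1,2,3) False f[OF I(2)] f[OF I(3)]] by simp
  qed
  then show "integrable (PiM I (\<lambda>_. M)) (\<lambda>x. f i (x i) * f j (x j))"
    and "integral\<^sup>L (PiM I (\<lambda>_. M)) (\<lambda>x. f i (x i) * f j (x j)) =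
          (if i = j then integral\<^sup>L M (\<lambda>z. (f i z)^2) else integral\<^sup>L M (f i) * integral\<^sup>L M (f j))"
    by auto
qed

lemma expand:
  fixes f h :: "nat \<Rightarrow> real \<Rightarrow> real" and I :: "nat set" and c :: real
  assumes M: "prob_space M" and I: "finite I"
    and f: "\<And>i. i \<in> I \<Longrightarrow> integrable M (f i)" and f2: "\<And>i. i \<in> I \<Longrightarrow> integrable M (\<lambda>z. (f i z)^2)"
    and h: "\<And>i. i \<in> I \<Longrightarrow> integrable M (h i)" and h2: "\<And>i. i \<in> I \<Longrightarrow> integrable M (\<lambda>z. (h i z)^2)"
  shows "integrable (PiM I (\<lambda>_. M) \<Otimes>\<^sub>M PiM I (\<lambda>_. M))
           (\<lambda>w. ((\<Sum>i\<in>I. f i (fst w i) * h i (snd w i)) - c)^2)"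
    and "integral\<^sup>L (PiM I (\<lambda>_. M) \<Otimes>\<^sub>M PiM I (\<lambda>_. M))
           (\<lambda>w. ((\<Sum>i\<in>I. f i (fst w i) * h i (snd w i)) - c)^2)
         = ((\<Sum>i\<in>I. integral\<^sup>L M (f i) * integral\<^sup>L M (h i)) - c)^2
           + (\<Sum>i\<in>I. integral\<^sup>L M (\<lambda>z. (f i z)^2) * integral\<^sup>L M (\<lambda>z. (h i z)^2)
                       - (integral\<^sup>L M (f i))^2 * (integral\<^sup>L M (h i))^2)"
proof -
  define P where "P = PiM I (\<lambda>_. M)"
  define PP where "PP = P \<Otimes>\<^sub>M P"
  have Pp: "prob_space P" unfolding P_def using M by (intro prob_space_PiM) auto
  have PPp: "prob_space PP" unfolding PP_def using Pp by (intro prob_space_pair)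
  define e where "e i = integral\<^sup>L M (f i) * integral\<^sup>L M (h i)" for i
  define A where "A i = integral\<^sup>L M (\<lambda>z. (f i z)^2) * integral\<^sup>L M (\<lambda>z. (h i z)^2)" for i
  have uu: "integrable PP (\<lambda>w. (f i (fst w i) * f j (fst w j)) * (h i (snd w i) * h j (snd w j)))
      \<and> integral\<^sup>L PP (\<lambda>w. (f i (fst w i) * f j (fst w j)) * (h i (snd w i) * h j (snd w j)))
         = (if i = j then A i else e i * e j)" if ij: "i \<in> I" "j \<in> I" for i j
  proof -
    note F = pim_ij[where f=f, OF M I ij f f2, folded P_def]
    note H = pim_ij[where f=h, OF M I ij h h2, folded P_def]
    show ?thesis using pair_prod[OF Pp Pp F(1) H(1), folded PP_def] F(2) H(2)
      by (auto simp: A_def e_def power2_eq_square)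
  qed
  have u: "integrable PP (\<lambda>w. f i (fst w i) * h i (snd w i))
      \<and> integral\<^sup>L PP (\<lambda>w. f i (fst w i) * h i (snd w i)) = e i" if i: "i \<in> I" for i
  proof -
    note F = pim_prod1[OF M I i f[OF i], folded P_def]
    note H = pim_prod1[OF M I i h[OF i], folded P_def]
    show ?thesis using pair_prod[OF Pp Pp F(1) H(1), folded PP_def] F(2) H(2)
      by (auto simp: e_def)
  qed
  have eq: "(\<lambda>w. ((\<Sum>i\<in>I. f i (fst w i) * h i (snd w i)) - c)^2) =
     (\<lambda>w. (\<Sum>i\<in>I. \<Sum>j\<in>I. (f i (fst w i) * f j (fst w j)) * (h i (snd w i) * h j (snd w j)))
        + ((-2*c) * (\<Sum>i\<in>I. f i (fst w i) * h i (snd w i)) + c^2))"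
  proof
    fix w
    have "(\<Sum>i\<in>I. f i (fst w i) * h i (snd w i)) * (\<Sum>i\<in>I. f i (fst w i) * h i (snd w i))
       = (\<Sum>i\<in>I. \<Sum>j\<in>I. (f i (fst w i) * f j (fst w j)) * (h i (snd w i) * h j (snd w j)))"
      by (simp add: sum_product mult.commute mult.left_commute)
    then show "((\<Sum>i\<in>I. f i (fst w i) * h i (snd w i)) - c)^2 =
       (\<Sum>i\<in>I. \<Sum>j\<in>I. (f i (fst w i) * f j (fst w j)) * (h i (snd w i) * h j (snd w j)))
        + ((-2*c) * (\<Sum>i\<in>I. f i (fst w i) * h i (snd w i)) + c^2)"
      by (simp add: power2_eq_square algebra_simps)
  qed
  have iS: "integrable PP (\<lambda>w. \<Sum>i\<in>I. f i (fst w i) * h i (snd w i))"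
    using u by (intro Bochner_Integration.integrable_sum) auto
  have iSS: "integrable PP (\<lambda>w. \<Sum>i\<in>I. \<Sum>j\<in>I. (f i (fst w i) * f j (fst w j)) * (h i (snd w i) * h j (snd w j)))"
    using uu by (intro Bochner_Integration.integrable_sum) auto
  have ic: "integrable PP (\<lambda>w. c^2)" using PPp prob_space.finite_measure finite_measure.integrable_const by blast
  show "integrable (PiM I (\<lambda>_. M) \<Otimes>\<^sub>M PiM I (\<lambda>_. M))
           (\<lambda>w. ((\<Sum>i\<in>I. f i (fst w i) * h i (snd w i)) - c)^2)"
    unfolding P_def[symmetric] PP_def[symmetric] eq
    using iS iSS ic by (intro Bochner_Integration.integrable_add integrable_mult_right) auto
  have "integral\<^sup>L PP (\<lambda>w. ((\<Sum>i\<in>I. f i (fst w i) * h i (snd w i)) - c)^2)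
      = (\<Sum>i\<in>I. \<Sum>j\<in>I. if i = j then A i else e i * e j) + ((-2*c) * (\<Sum>i\<in>I. e i) + c^2)"
    unfolding eq
    using iS iSS ic uu u prob_space.prob_space[OF PPp]
    by (simp add: Bochner_Integration.integral_add Bochner_Integration.integral_sum measure_def)
  also have "\<dots> = ((\<Sum>i\<in>I. e i) - c)^2 + (\<Sum>i\<in>I. A i - (e i)^2)"
    by (simp add: diag_sum[OF I] power2_eq_square algebra_simps)
  finally show "integral\<^sup>L (PiM I (\<lambda>_. M) \<Otimes>\<^sub>M PiM I (\<lambda>_. M))
           (\<lambda>w. ((\<Sum>i\<in>I. f i (fst w i) * h i (snd w i)) - c)^2)
         = ((\<Sum>i\<in>I. integral\<^sup>L M (f i) * integral\<^sup>L M (h i)) - c)^2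
           + (\<Sum>i\<in>I. integral\<^sup>L M (\<lambda>z. (f i z)^2) * integral\<^sup>L M (\<lambda>z. (h i z)^2)
                       - (integral\<^sup>L M (f i))^2 * (integral\<^sup>L M (h i))^2)"
    unfolding PP_def P_def e_def A_def by (simp add: power_mult_distrib)
qed




lemma arith_bias:
  fixes a b p q D B :: real
  assumes "\<bar>a - p\<bar> \<le> D" "\<bar>b - q\<bar> \<le> D" "0 \<le> p" "p \<le> B" "0 \<le> q" "q \<le> B"
  shows "\<bar>a*b - p*q\<bar> \<le> D*(2*B + D)"
proof -
  have "a*b - p*q = (a-p)*b + p*(b-q)" by (simp add: algebra_simps)
  then have "\<bar>a*b - p*q\<bar> \<le> \<bar>(a-p)*b\<bar> + \<bar>p*(b-q)\<bar>"
    by (metis abs_triangle_ineq)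
  also have "\<dots> = \<bar>a-p\<bar>*\<bar>b\<bar> + p*\<bar>b-q\<bar>" using assms by (simp add: abs_mult)
  also have "\<dots> \<le> D*(B + D) + B*D"
    using assms by (intro add_mono mult_mono) (auto simp: abs_le_iff)
  finally show ?thesis by (simp add: algebra_simps)
qed

lemma coord:
  fixes \<rho> \<sigma> c B2 :: real
  assumes c: "0 \<le> c" and r: "\<rho>^2 \<le> B2"
  defines "E \<equiv> integral\<^sup>L std_gauss (\<lambda>z. gf c (m0 c \<sigma>) (\<rho> + \<sigma>*z))"
      and "E2 \<equiv> integral\<^sup>L std_gauss (\<lambda>z. (gf c (m0 c \<sigma>) (\<rho> + \<sigma>*z))^2)"
  shows "\<bar>E - \<rho>^2\<bar> \<le> c + \<sigma>^2" "0 \<le> E2 - E^2" "E2 - E^2 \<le> 4*B2*\<sigma>^2 + 2*\<sigma>^4"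
    "E^2 \<le> (B2 + c + \<sigma>^2)^2"
proof -
  show b: "\<bar>E - \<rho>^2\<bar> \<le> c + \<sigma>^2" unfolding E_def by (rule mean_bound[OF c])
  show "0 \<le> E2 - E^2" unfolding E_def E2_def by (rule var_bound(2))
  have "E2 - E^2 \<le> 4*\<rho>^2*\<sigma>^2 + 2*\<sigma>^4" unfolding E_def E2_def by (rule var_bound(1))
  also have "\<dots> \<le> 4*B2*\<sigma>^2 + 2*\<sigma>^4" using r by (intro add_mono mult_right_mono) auto
  finally show "E2 - E^2 \<le> 4*B2*\<sigma>^2 + 2*\<sigma>^4" .
  have "\<bar>E\<bar> \<le> B2 + c + \<sigma>^2" using b r zero_le_power2[of \<rho>] unfolding abs_le_iff by linarith
  then have "\<bar>E\<bar>^2 \<le> (B2 + c + \<sigma>^2)^2" by (rule power_mono) simp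
  then show "E^2 \<le> (B2 + c + \<sigma>^2)^2" by simp
qed

lemma var_arith:
  fixes F2 H2 F H V R :: real
  assumes "0 \<le> F2 - F^2" "F2 - F^2 \<le> V" "0 \<le> H2 - H^2" "H2 - H^2 \<le> V" "F^2 \<le> R^2" "H^2 \<le> R^2"
  shows "F2*H2 - F^2*H^2 \<le> V^2 + 2*V*R^2"
proof -
  define vf where "vf = F2 - F^2"
  define vh where "vh = H2 - H^2"
  have "F2*H2 - F^2*H^2 = vf * vh + vf * H^2 + vh * F^2" by (simp add: vf_def vh_def algebra_simps)
  also have "\<dots> \<le> V*V + V*R^2 + V*R^2"
    using assms unfolding vf_def[symmetric] vh_def[symmetric]
    by (intro add_mono mult_mono) auto
  finally show ?thesis by (simp add: power2_eq_square algebra_simps)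
qed

lemma sum_if_card:
  fixes K :: real
  assumes "finite I"
  shows "(\<Sum>i\<in>I. if P i then K else 0) = real (card {i\<in>I. P i}) * K"
  using assms by (simp add: sum.inter_filter[symmetric])

lemma sq_powr: "\<bar>x\<bar> \<le> real n powr b \<Longrightarrow> x^2 \<le> real n powr (2*b)"
proof -
  assume a: "\<bar>x\<bar> \<le> real n powr b"
  have "x^2 = \<bar>x\<bar>^2" by simp
  also have "\<dots> \<le> (real n powr b)^2" using a by (intro power_mono) auto
  also have "\<dots> = real n powr (2*b)" by (simp add: power2_eq_square powr_add[symmetric])
  finally show ?thesis .
qed

lemma mse_exact:
  fixes \<sigma> :: real and n :: nat
  assumes n: "1 \<le> n"
  defines "c \<equiv> \<sigma>^2 * tau n"
  defines "f \<equiv> \<lambda>(\<rho>::nat \<Rightarrow> real) i z. gf c (m0 c \<sigma>) (\<rho> i + \<sigma>*z)"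
  shows "mse \<sigma> n \<mu> \<theta> = ennreal ((1/real n)^2 *
     (((\<Sum>i\<in>{..<n}. integral\<^sup>L std_gauss (f \<mu> i) * integral\<^sup>L std_gauss (f \<theta> i)) - (\<Sum>i<n. (\<mu> i)\<^sup>2 * (\<theta> i)\<^sup>2))^2
      + (\<Sum>i\<in>{..<n}. integral\<^sup>L std_gauss (\<lambda>z. (f \<mu> i z)^2) * integral\<^sup>L std_gauss (\<lambda>z. (f \<theta> i z)^2)
           - (integral\<^sup>L std_gauss (f \<mu> i))^2 * (integral\<^sup>L std_gauss (f \<theta> i))^2)))"
proof -
  define Cs where "Cs = (\<Sum>i<n. (\<mu> i)\<^sup>2 * (\<theta> i)\<^sup>2)"
  have cent: "cent0 \<sigma> n = m0 c \<sigma>" by (simp add: cent0_def m0_def c_def)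
  define G where "G = (\<lambda>w. ((\<Sum>i\<in>{..<n}. f \<mu> i (fst w i) * f \<theta> i (snd w i)) - Cs)^2)"
  have pt: "(Qhat2 \<sigma> n (\<lambda>i. \<mu> i + \<sigma> * fst w i) (\<lambda>i. \<theta> i + \<sigma> * snd w i) - Qfun n \<mu> \<theta>)\<^sup>2
      = (1/real n)^2 * G w" for w
  proof -
    have "Qhat2 \<sigma> n (\<lambda>i. \<mu> i + \<sigma> * fst w i) (\<lambda>i. \<theta> i + \<sigma> * snd w i) - Qfun n \<mu> \<theta>
        = (1/real n) * ((\<Sum>i\<in>{..<n}. f \<mu> i (fst w i) * f \<theta> i (snd w i)) - Cs)"
      unfolding Qhat2_def Qfun_def Cs_def cent f_def gf_def c_def by (simp add: right_diff_distrib)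
    then show ?thesis unfolding G_def by (simp add: power_divide)
  qed
  have fi: "integrable std_gauss (f \<rho> i)" "integrable std_gauss (\<lambda>z. (f \<rho> i z)^2)" for \<rho> i
    unfolding f_def using gf_int gf_int2 by auto
  have iG: "integrable (noise n) G" unfolding G_def noise_def by (rule expand(1)[OF sg_prob]) (auto simp: fi)
  have "mse \<sigma> n \<mu> \<theta> = (\<integral>\<^sup>+ w. ennreal ((1/real n)^2 * G w) \<partial>noise n)"
    unfolding mse_def pt ..
  also have "\<dots> = ennreal (integral\<^sup>L (noise n) (\<lambda>w. (1/real n)^2 * G w))"
    using iG by (intro nn_integral_eq_integral) (auto simp: G_def)
  also have "integral\<^sup>L (noise n) (\<lambda>w. (1/real n)^2 * G w) = (1/real n)^2 * integral\<^sup>L (noise n) G" by simp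
  also have "integral\<^sup>L (noise n) G = ((\<Sum>i\<in>{..<n}. integral\<^sup>L std_gauss (f \<mu> i) * integral\<^sup>L std_gauss (f \<theta> i)) - Cs)^2
      + (\<Sum>i\<in>{..<n}. integral\<^sup>L std_gauss (\<lambda>z. (f \<mu> i z)^2) * integral\<^sup>L std_gauss (\<lambda>z. (f \<theta> i z)^2)
           - (integral\<^sup>L std_gauss (f \<mu> i))^2 * (integral\<^sup>L std_gauss (f \<theta> i))^2)"
    unfolding G_def noise_def by (rule expand(2)[OF sg_prob]) (auto simp: fi)
  finally show ?thesis by (simp add: Cs_def)
qed

lemma mse_bound:
  fixes \<sigma> \<kappa> \<beta> \<epsilon> b :: real and n :: nat
  assumes \<sigma>: "0 < \<sigma>" and \<kappa>: "0 < \<kappa>" "\<kappa> < 1/2" and n: "1 \<le> n"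
    and Om: "(\<mu>, \<theta>) \<in> Omega \<beta> \<epsilon> b n"
  defines "c \<equiv> \<sigma>^2 * tau n"
  defines "D \<equiv> c + \<sigma>^2" and "B2 \<equiv> real n powr (2*b)"
  defines "V \<equiv> 4*B2*\<sigma>^2 + 2*\<sigma>^4" and "R \<equiv> B2 + c + \<sigma>^2"
  defines "T \<equiv> \<sigma>^4 * (4/\<kappa>^2) * exp (-\<kappa> * tau n) / sqrt (1 - 2*\<kappa>)"
  shows "mse \<sigma> n \<mu> \<theta> \<le> ennreal ((1/real n)^2 * ((real n powr \<epsilon> * (D*(2*B2+D)))^2
      + (real n * T^2 + 2 * real n powr \<beta> * ((V + R^2) * T) + real n powr \<epsilon> * (V^2 + 2*V*R^2))))"
proof -
  have c0: "0 \<le> c" using n by (simp add: c_def tau_def)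
  define m where "m = m0 c \<sigma>"
  define f where "f = (\<lambda>(\<rho>::nat \<Rightarrow> real) i z. gf c m (\<rho> i + \<sigma>*z))"
  define F where "F \<rho> i = integral\<^sup>L std_gauss (f \<rho> i)" for \<rho> i
  define F2 where "F2 \<rho> i = integral\<^sup>L std_gauss (\<lambda>z. (f \<rho> i z)^2)" for \<rho> i
  define W0 where "W0 = integral\<^sup>L std_gauss (\<lambda>z. (gf c m (\<sigma>*z))^2)"
  define Sm where "Sm = {i\<in>{..<n}. \<mu> i \<noteq> 0}"
  define St where "St = {i\<in>{..<n}. \<theta> i \<noteq> 0}"
  define S where "S = {i\<in>{..<n}. \<mu> i * \<theta> i \<noteq> 0}"
  have ex: "mse \<sigma> n \<mu> \<theta> = ennreal ((1/real n)^2 *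
     (((\<Sum>i\<in>{..<n}. F \<mu> i * F \<theta> i) - (\<Sum>i<n. (\<mu> i)\<^sup>2 * (\<theta> i)\<^sup>2))^2
      + (\<Sum>i\<in>{..<n}. F2 \<mu> i * F2 \<theta> i - (F \<mu> i)^2 * (F \<theta> i)^2)))"
    unfolding F_def F2_def f_def m_def c_def by (rule mse_exact[OF n])
  from Om have cm: "real (card Sm) \<le> real n powr \<beta>" and bm: "\<forall>i<n. \<bar>\<mu> i\<bar> \<le> real n powr b"
    and ct: "real (card St) \<le> real n powr \<beta>" and bt: "\<forall>i<n. \<bar>\<theta> i\<bar> \<le> real n powr b"
    and cS: "real (card S) \<le> real n powr \<epsilon>"
    by (auto simp: Omega_def Sm_def St_def S_def)
  have r2: "(\<rho> i)^2 \<le> B2" if "\<forall>i<n. \<bar>\<rho> i\<bar> \<le> real n powr b" "i < n" for \<rho> :: "nat \<Rightarrow> real" and i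
    unfolding B2_def using that by (intro sq_powr) auto
  have co: "\<bar>F \<rho> i - (\<rho> i)^2\<bar> \<le> D" "0 \<le> F2 \<rho> i - (F \<rho> i)^2" "F2 \<rho> i - (F \<rho> i)^2 \<le> V"
     "(F \<rho> i)^2 \<le> R^2"
    if "\<forall>i<n. \<bar>\<rho> i\<bar> \<le> real n powr b" "i < n" for \<rho> :: "nat \<Rightarrow> real" and i
    using coord[OF c0 r2[OF that], of \<sigma>]
    unfolding F_def F2_def f_def m_def D_def V_def R_def by auto
  have z: "F \<rho> i = 0" "F2 \<rho> i = W0" if "\<rho> i = 0" for \<rho> :: "nat \<Rightarrow> real" and i
    using that mean0[of c \<sigma>] by (simp_all add: F_def F2_def f_def W0_def m_def)
  have W0: "0 \<le> W0" "W0 \<le> T"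
    unfolding W0_def using tail_bound[OF \<sigma> \<kappa>, of "tau n"] by (auto simp: T_def m_def c_def)
  have B2: "0 \<le> B2" by (simp add: B2_def)
  have V0: "0 \<le> V" using B2 by (simp add: V_def)
  have T0: "0 \<le> T" using W0 by simp
  define X where "X = D*(2*B2+D)"
  define t where "t i = F \<mu> i * F \<theta> i - (\<mu> i)^2 * (\<theta> i)^2" for i
  have t0: "t i = 0" if "i \<notin> S" "i < n" for i
    using that z by (auto simp: S_def t_def)
  have tb: "\<bar>t i\<bar> \<le> X" if "i \<in> S" for i
  proof -
    have i: "i < n" using that by (simp add: S_def)
    show ?thesis unfolding t_def X_def
      by (rule arith_bias[OF co(1)[OF bm i] co(1)[OF bt i]]) (use r2[OF bm i] r2[OF bt i] in auto)
  qed
  have "(\<Sum>i\<in>{..<n}. F \<mu> i * F \<theta> i) - (\<Sum>i<n. (\<mu> i)\<^sup>2 * (\<theta> i)\<^sup>2) = (\<Sum>i\<in>{..<n}. t i)"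
    by (simp add: t_def sum_subtractf)
  also have "\<dots> = (\<Sum>i\<in>S. t i)"
    using t0 by (intro sum.mono_neutral_right) (auto simp: S_def)
  finally have bias_eq: "(\<Sum>i\<in>{..<n}. F \<mu> i * F \<theta> i) - (\<Sum>i<n. (\<mu> i)\<^sup>2 * (\<theta> i)\<^sup>2) = (\<Sum>i\<in>S. t i)" .
  have "\<bar>\<Sum>i\<in>S. t i\<bar> \<le> (\<Sum>i\<in>S. \<bar>t i\<bar>)" by (rule sum_abs)
  also have "\<dots> \<le> (\<Sum>i\<in>S. X)" using tb by (intro sum_mono) auto
  also have "\<dots> = real (card S) * X" by simp
  also have "\<dots> \<le> real n powr \<epsilon> * X"
    using cS tb[of i] by (intro mult_right_mono) (auto simp: X_def D_def B2 c0 intro!: mult_nonneg_nonneg add_nonneg_nonneg)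
  finally have "\<bar>\<Sum>i\<in>S. t i\<bar>^2 \<le> (real n powr \<epsilon> * X)^2" by (intro power_mono) auto
  then have bias: "((\<Sum>i\<in>{..<n}. F \<mu> i * F \<theta> i) - (\<Sum>i<n. (\<mu> i)\<^sup>2 * (\<theta> i)\<^sup>2))^2 \<le> (real n powr \<epsilon> * X)^2"
    unfolding bias_eq by simp
  define Vb where "Vb i = T^2 + (if \<mu> i \<noteq> 0 \<or> \<theta> i \<noteq> 0 then (V + R^2) * T else 0)
      + (if \<mu> i * \<theta> i \<noteq> 0 then V^2 + 2*V*R^2 else 0)" for i
  have vb: "F2 \<mu> i * F2 \<theta> i - (F \<mu> i)^2 * (F \<theta> i)^2 \<le> Vb i" if i: "i < n" for i
  proof -
    have T2: "0 \<le> T^2" by simp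
    have VRT: "0 \<le> (V + R^2) * T" using V0 T0 by simp
    have VV: "0 \<le> V^2 + 2*V*R^2" using V0 by simp
    have F2b: "F2 \<rho> i \<le> V + R^2" "0 \<le> F2 \<rho> i" if "\<forall>i<n. \<bar>\<rho> i\<bar> \<le> real n powr b" for \<rho>
      using co[OF that i] by (auto intro: order.trans[OF zero_le_power2])
    consider "\<mu> i = 0" "\<theta> i = 0" | "\<mu> i \<noteq> 0" "\<theta> i = 0" | "\<mu> i = 0" "\<theta> i \<noteq> 0" | "\<mu> i \<noteq> 0" "\<theta> i \<noteq> 0"
      by blast
    then show ?thesis
    proof cases
      case 1
      then have "F2 \<mu> i * F2 \<theta> i - (F \<mu> i)^2 * (F \<theta> i)^2 = W0 * W0" by (simp add: z)
      also have "\<dots> \<le> T * T" using W0 by (intro mult_mono) auto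
      finally show ?thesis using 1 by (simp add: Vb_def power2_eq_square)
    next
      case 2
      then have "F2 \<mu> i * F2 \<theta> i - (F \<mu> i)^2 * (F \<theta> i)^2 = F2 \<mu> i * W0" by (simp add: z)
      also have "\<dots> \<le> (V + R^2) * T" using W0 F2b[OF bm] by (intro mult_mono) auto
      finally show ?thesis using 2 by (simp add: Vb_def add_increasing)
    next
      case 3
      then have "F2 \<mu> i * F2 \<theta> i - (F \<mu> i)^2 * (F \<theta> i)^2 = W0 * F2 \<theta> i" by (simp add: z)
      also have "\<dots> \<le> T * (V + R^2)" using W0 F2b[OF bt] by (intro mult_mono) auto
      finally show ?thesis using 3 by (simp add: Vb_def add_increasing mult.commute)
    next
      case 4
      have "F2 \<mu> i * F2 \<theta> i - (F \<mu> i)^2 * (F \<theta> i)^2 \<le> V^2 + 2*V*R^2"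
        by (rule var_arith) (use co[OF bm i] co[OF bt i] in auto)
      moreover have "Vb i = T^2 + (V + R^2) * T + (V^2 + 2*V*R^2)" using 4 by (simp add: Vb_def)
      ultimately show ?thesis using VRT T2 by linarith
    qed
  qed
  have U: "{i\<in>{..<n}. \<mu> i \<noteq> 0 \<or> \<theta> i \<noteq> 0} = Sm \<union> St" by (auto simp: Sm_def St_def)
  have cU: "real (card {i\<in>{..<n}. \<mu> i \<noteq> 0 \<or> \<theta> i \<noteq> 0}) \<le> 2 * real n powr \<beta>"
  proof -
    have "card (Sm \<union> St) \<le> card Sm + card St" by (rule card_Un_le)
    then have "real (card (Sm \<union> St)) \<le> real (card Sm) + real (card St)" by linarith
    then show ?thesis using cm ct U by simp
  qed
  have "(\<Sum>i\<in>{..<n}. F2 \<mu> i * F2 \<theta> i - (F \<mu> i)^2 * (F \<theta> i)^2) \<le> (\<Sum>i\<in>{..<n}. Vb i)"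
    using vb by (intro sum_mono) auto
  also have "\<dots> = real n * T^2 + real (card {i\<in>{..<n}. \<mu> i \<noteq> 0 \<or> \<theta> i \<noteq> 0}) * ((V + R^2) * T)
      + real (card S) * (V^2 + 2*V*R^2)"
    unfolding Vb_def by (simp add: sum.distrib sum_if_card S_def del: of_nat_sum)
  also have "\<dots> \<le> real n * T^2 + 2 * real n powr \<beta> * ((V + R^2) * T) + real n powr \<epsilon> * (V^2 + 2*V*R^2)"
    using cU cS V0 T0 by (intro add_mono mult_right_mono) auto
  finally have var: "(\<Sum>i\<in>{..<n}. F2 \<mu> i * F2 \<theta> i - (F \<mu> i)^2 * (F \<theta> i)^2)
      \<le> real n * T^2 + 2 * real n powr \<beta> * ((V + R^2) * T) + real n powr \<epsilon> * (V^2 + 2*V*R^2)" .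
  show ?thesis unfolding ex
    using bias var by (intro ennreal_leI mult_left_mono add_mono) (auto simp: X_def)
qed




lemma ln_le_powr: fixes x a :: real assumes "0 < x" "0 < a" shows "ln x \<le> x powr a / a"
proof -
  have "ln (x powr a) \<le> x powr a - 1" by (rule ln_le_minus_one) (use assms in simp)
  then have "a * ln x \<le> x powr a" using assms by simp
  then show ?thesis using assms by (simp add: field_simps)
qed

lemma final_real:
  fixes x \<sigma> \<kappa> \<beta> \<epsilon> b \<delta> :: real
  assumes x: "3 \<le> x" and \<sigma>: "0 < \<sigma>" and b: "0 < b" and \<epsilon>: "0 < \<epsilon>"
    and \<delta>: "0 < \<delta>" "2*\<delta> \<le> \<epsilon>" "\<beta> - 1/2 + \<delta> \<le> 0" and \<kappa>: "\<kappa> = 1/2 - \<delta>" "0 < \<kappa>"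
  defines "L \<equiv> ln x"
  defines "c \<equiv> \<sigma>^2 * L"
  defines "D \<equiv> c + \<sigma>^2" and "B2 \<equiv> x powr (2*b)"
  defines "V \<equiv> 4*B2*\<sigma>^2 + 2*\<sigma>^4" and "R \<equiv> B2 + c + \<sigma>^2"
  defines "KT \<equiv> \<sigma>^4 * (4/\<kappa>^2) / sqrt (1 - 2*\<kappa>)"
  defines "T \<equiv> \<sigma>^4 * (4/\<kappa>^2) * exp (-\<kappa> * L) / sqrt (1 - 2*\<kappa>)"
  defines "kb \<equiv> 1 / (2*b)"
  defines "cR \<equiv> 1 + 2*\<sigma>^2*kb" and "cV \<equiv> 4*\<sigma>^2 + 2*\<sigma>^4"
  defines "K1 \<equiv> (2*\<sigma>^2 * (2 + 2*\<sigma>^2*kb))^2"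
  defines "K3 \<equiv> 2*(cV + cR^2)*KT" and "K4 \<equiv> cV^2 + 2*cV*cR^2"
  shows "(1/x)^2 * ((x powr \<epsilon> * (D*(2*B2+D)))^2
      + (x * T^2 + 2 * x powr \<beta> * ((V + R^2) * T) + x powr \<epsilon> * (V^2 + 2*V*R^2)))
    \<le> (K1 + KT^2 + K3 + K4) * (x powr (2*\<epsilon> + 4*b - 2) * L^2 + x powr (\<epsilon> + 6*b - 2))"
proof -
  have x0: "0 < x" using x by simp
  have x1: "1 \<le> x" using x by simp
  have L1: "1 \<le> L"
  proof -
    have "exp 1 \<le> x" using exp_le x by linarith
    then show ?thesis unfolding L_def using x0 by (metis ln_exp ln_le_cancel_iff exp_gt_zero)
  qed
  have B1: "1 \<le> B2" unfolding B2_def using x1 b by (simp add: ge_one_powr_ge_zero)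
  have LB: "L \<le> kb * B2" unfolding L_def kb_def B2_def using ln_le_powr[OF x0, of "2*b"] b by simp
  have D0: "0 \<le> D" by (simp add: D_def c_def) (use L1 in simp)
  have D1: "D \<le> 2*\<sigma>^2*L" unfolding D_def c_def using mult_left_mono[OF L1, of "\<sigma>^2"] by (simp add: mult.commute)
  have D2: "D \<le> 2*\<sigma>^2*kb*B2" using D1 LB \<sigma> by (smt (verit) mult_left_mono zero_le_power2 mult.assoc)
  have R1: "R \<le> cR * B2" using D2 by (simp add: R_def cR_def D_def algebra_simps)
  have R0: "0 \<le> R" using D0 B1 by (simp add: R_def D_def)
  have V1: "V \<le> cV * B2" using mult_left_mono[OF B1, of "2*\<sigma>^4"] by (simp add: V_def cV_def algebra_simps)
  have V0: "0 \<le> V" using B1 by (simp add: V_def)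
  have kb0: "0 \<le> kb" using b by (simp add: kb_def)
  have T: "T = KT * x powr (-\<kappa>)"
    unfolding T_def KT_def L_def using x0 by (simp add: powr_def)
  have k2: "0 < 1 - 2*\<kappa>" using \<kappa> \<delta> by simp
  have KT0: "0 \<le> KT" unfolding KT_def using k2 \<kappa> by (intro divide_nonneg_pos mult_nonneg_nonneg) auto
  have p2: "(1/x)^2 = x powr (-2)" using x0 by (simp add: powr_minus_divide power_divide)
  have t1: "(1/x)^2 * (x powr \<epsilon> * (D*(2*B2+D)))^2 \<le> K1 * (x powr (2*\<epsilon> + 4*b - 2) * L^2)"
  proof -
    have "D*(2*B2+D) \<le> (2*\<sigma>^2*L) * ((2 + 2*\<sigma>^2*kb)*B2)"
      using D0 D1 D2 B1 by (intro mult_mono) (auto simp: algebra_simps)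
    moreover have "0 \<le> D*(2*B2+D)" using D0 B1 by simp
    ultimately have "(x powr \<epsilon> * (D*(2*B2+D)))^2 \<le> (x powr \<epsilon> * ((2*\<sigma>^2*L) * ((2 + 2*\<sigma>^2*kb)*B2)))^2"
      by (intro power_mono mult_left_mono) auto
    also have "\<dots> = K1 * (L^2 * ((x powr \<epsilon>)^2 * B2^2))"
      by (simp add: K1_def power2_eq_square algebra_simps)
    finally have "(1/x)^2 * (x powr \<epsilon> * (D*(2*B2+D)))^2 \<le> (1/x)^2 * (K1 * (L^2 * ((x powr \<epsilon>)^2 * B2^2)))"
      by (intro mult_left_mono) auto
    also have "(1/x)^2 * (K1 * (L^2 * ((x powr \<epsilon>)^2 * B2^2))) = K1 * (x powr (2*\<epsilon> + 4*b - 2) * L^2)"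
      unfolding p2 B2_def
      by (simp add: power2_eq_square algebra_simps flip: powr_add)
    finally show ?thesis .
  qed
  have B2sq: "B2 \<le> B2^2" "B2^2 \<le> B2^3" using B1 by (simp_all add: power2_eq_square power3_eq_cube)
  have xm: "x powr (-\<kappa>) \<ge> 0" by simp
  have t2: "(1/x)^2 * (x * T^2) \<le> KT^2 * x powr (\<epsilon> + 6*b - 2)"
  proof -
    have "(1/x)^2 * (x * T^2) = KT^2 * (x powr (-2) * x powr 1 * x powr (-\<kappa>) * x powr (-\<kappa>))"
      unfolding T p2 using x0 by (simp add: power2_eq_square)
    also have "\<dots> = KT^2 * x powr (-2 + 1 + (-\<kappa>) + (-\<kappa>))" by (simp only: powr_add)
    also have "\<dots> \<le> KT^2 * x powr (\<epsilon> + 6*b - 2)"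
      using \<kappa> \<delta> b x1 by (intro mult_left_mono powr_mono) auto
    finally show ?thesis .
  qed
  have t3: "(1/x)^2 * (2 * x powr \<beta> * ((V + R^2) * T)) \<le> K3 * x powr (\<epsilon> + 6*b - 2)"
  proof -
    have "R^2 \<le> (cR * B2)^2" using R0 R1 by (intro power_mono) auto
    then have "V + R^2 \<le> cV * B2^2 + cR^2 * B2^2"
      using V1 B2sq mult_left_mono[OF B2sq(1), of cV] by (simp add: cV_def power_mult_distrib)
    then have VR: "V + R^2 \<le> (cV + cR^2) * B2^2" by (simp add: algebra_simps)
    have "(1/x)^2 * (2 * x powr \<beta> * ((V + R^2) * T)) \<le> (1/x)^2 * (2 * x powr \<beta> * (((cV + cR^2) * B2^2) * T))"
      using VR KT0 xm by (intro mult_left_mono mult_right_mono) (auto simp: T)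
    also have "\<dots> = K3 * (x powr (-2) * x powr \<beta> * x powr (2*b) * x powr (2*b) * x powr (-\<kappa>))"
      unfolding T p2 K3_def B2_def by (simp add: power2_eq_square algebra_simps)
    also have "\<dots> = K3 * x powr (-2 + \<beta> + 2*b + 2*b + (-\<kappa>))" by (simp only: powr_add)
    also have "\<dots> \<le> K3 * x powr (\<epsilon> + 6*b - 2)"
    proof (intro mult_left_mono powr_mono x1)
      show "-2 + \<beta> + 2*b + 2*b + (-\<kappa>) \<le> \<epsilon> + 6*b - 2" using \<kappa> \<delta> b \<epsilon> by simp
      show "0 \<le> K3" unfolding K3_def using KT0 by (simp add: cV_def)
    qed
    finally show ?thesis .
  qed
  have t4: "(1/x)^2 * (x powr \<epsilon> * (V^2 + 2*V*R^2)) \<le> K4 * x powr (\<epsilon> + 6*b - 2)"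
  proof -
    have "V^2 \<le> (cV * B2)^2" using V0 V1 by (intro power_mono) auto
    also have "\<dots> \<le> cV^2 * B2^3" using B2sq by (simp add: power_mult_distrib mult_left_mono)
    finally have a: "V^2 \<le> cV^2 * B2^3" .
    have "R^2 \<le> (cR * B2)^2" using R0 R1 by (intro power_mono) auto
    then have "2*V*R^2 \<le> 2*(cV*B2)*(cR*B2)^2" using V0 V1 by (intro mult_mono) auto
    also have "\<dots> = 2*cV*cR^2*B2^3" by (simp add: power2_eq_square power3_eq_cube)
    finally have "V^2 + 2*V*R^2 \<le> K4 * B2^3" using a by (simp add: K4_def algebra_simps)
    then have "(1/x)^2 * (x powr \<epsilon> * (V^2 + 2*V*R^2)) \<le> (1/x)^2 * (x powr \<epsilon> * (K4 * B2^3))"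
      by (intro mult_left_mono) auto
    also have "\<dots> = K4 * x powr (\<epsilon> + 6*b - 2)"
      unfolding p2 B2_def by (simp add: power3_eq_cube algebra_simps flip: powr_add)
    finally show ?thesis .
  qed
  have K0: "0 \<le> K1" "0 \<le> KT^2" "0 \<le> K3" "0 \<le> K4"
    using KT0 by (auto simp: K1_def K3_def K4_def cV_def kb0)
  define A where "A = x powr (2*\<epsilon> + 4*b - 2) * L^2"
  define Bt where "Bt = x powr (\<epsilon> + 6*b - 2)"
  have A0: "0 \<le> A" "0 \<le> Bt" by (auto simp: A_def Bt_def)
  have "(1/x)^2 * ((x powr \<epsilon> * (D*(2*B2+D)))^2
      + (x * T^2 + 2 * x powr \<beta> * ((V + R^2) * T) + x powr \<epsilon> * (V^2 + 2*V*R^2)))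
     \<le> K1 * A + KT^2 * Bt + K3 * Bt + K4 * Bt"
    using t1 t2 t3 t4 unfolding A_def Bt_def by (simp add: algebra_simps)
  also have "\<dots> \<le> (K1 + KT^2 + K3 + K4) * (A + Bt)"
    using K0 A0 by (simp add: algebra_simps add_increasing mult_nonneg_nonneg)
  finally show ?thesis unfolding A_def Bt_def .
qed


theorem theorem1:
  fixes \<beta> \<epsilon> b \<sigma> :: real
  assumes "0 < \<epsilon>" "\<epsilon> \<le> \<beta>" "\<beta> < 1/2" "0 < b" "0 < \<sigma>"
  shows "\<exists>C>0. \<exists>N. \<forall>n\<ge>N. \<forall>\<mu> \<theta>. (\<mu>, \<theta>) \<in> Omega \<beta> \<epsilon> b n \<longrightarrow>
           mse \<sigma> n \<mu> \<theta> \<le> ennreal (C * (real n powr (2*\<epsilon> + 4*b - 2) * (ln (real n))\<^sup>2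
                                        + real n powr (\<epsilon> + 6*b - 2)))"
proof -
  note a = assms
  define \<delta> where "\<delta> = min (\<epsilon>/2) (1/2 - \<beta>)"
  define \<kappa> where "\<kappa> = 1/2 - \<delta>"
  have d: "0 < \<delta>" "2*\<delta> \<le> \<epsilon>" "\<beta> - 1/2 + \<delta> \<le> 0" using a by (auto simp: \<delta>_def min_def)
  have k: "\<kappa> = 1/2 - \<delta>" "0 < \<kappa>" "\<kappa> < 1/2" using a d by (auto simp: \<kappa>_def \<delta>_def)
  define kb where "kb = 1 / (2*b)"
  define cR where "cR = 1 + 2*\<sigma>^2*kb"
  define cV where "cV = 4*\<sigma>^2 + 2*\<sigma>^4"
  define KT where "KT = \<sigma>^4 * (4/\<kappa>^2) / sqrt (1 - 2*\<kappa>)"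
  define K1 where "K1 = (2*\<sigma>^2 * (2 + 2*\<sigma>^2*kb))^2"
  define K3 where "K3 = 2*(cV + cR^2)*KT"
  define K4 where "K4 = cV^2 + 2*cV*cR^2"
  define C where "C = K1 + KT^2 + K3 + K4"
  show ?thesis
  proof (intro exI[of _ "\<bar>C\<bar> + 1"] conjI exI[of _ "3::nat"] allI impI)
    show "0 < \<bar>C\<bar> + 1" by simp
    fix n :: nat and \<mu> \<theta> assume n: "3 \<le> n" and Om: "(\<mu>, \<theta>) \<in> Omega \<beta> \<epsilon> b n"
    define S where "S = real n powr (2*\<epsilon> + 4*b - 2) * (ln (real n))\<^sup>2 + real n powr (\<epsilon> + 6*b - 2)"
    have S0: "0 \<le> S" by (simp add: S_def)
    have x: "3 \<le> real n" using n by simp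
    note mb = mse_bound[OF a(5) k(2,3) _ Om, unfolded tau_def]
    note fr = final_real[OF x a(5) a(4) a(1) d k(1,2)]
    have "mse \<sigma> n \<mu> \<theta> \<le> ennreal (C * S)"
      using mb n fr unfolding C_def S_def K1_def K3_def K4_def KT_def cV_def cR_def kb_def
      by (auto intro: order.trans ennreal_leI)
    also have "C * S \<le> (\<bar>C\<bar> + 1) * S" using S0 by (intro mult_right_mono) auto
    finally show "mse \<sigma> n \<mu> \<theta> \<le> ennreal ((\<bar>C\<bar> + 1) * (real n powr (2*\<epsilon> + 4*b - 2) * (ln (real n))\<^sup>2
                                        + real n powr (\<epsilon> + 6*b - 2)))"
      unfolding S_def by (simp add: ennreal_leI)
  qed
qed

end
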